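(* Let $\rho>-1$ and let a BIMS channel have capacity $C\in[0,1]$ and function $F(\rho)$. Then: (i) $F^{\rm bec}(\rho;C)\le F(\rho)\le F^{\rm bsc}(\rho;C)$. (ii) If $-1<\rho<0$, then $C^{\rm bsc}\bigl(F(\rho)\bigr)\le C\le C^{\rm bec}\bigl(F(\rho)\bigr)$. (iii) If $\rho>0$, then $C^{\rm bec}\bigl(F(\rho)\bigr)\le C\le C^{\rm bsc}\bigl(F(\rho)\bigr)$. The extremes in (i)–(iii) are attained by the BEC and the BSC, respectively. Moreover, for every pair $(C,t)$ with $C\in[0,1]$ and $F^{\rm bec}(\rho;C)\le t\le F^{\rm bsc}(\rho;C)$ there exists a BIMS channel with capacity $C$ and $F(\rho)=t$; conversely, if this inequality fails for $(C,t)$, no BIMS channel has capacity $C$ and $F(\rho)=t$.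
   Context: A BIMS (binary-input memoryless symmetric) channel is a memoryless channel with input alphabet $\{x_0,x_1\}$, finite output alphabet $\mathcal Y$ and transition probabilities $P_{Y|X}(y|x)$. It is symmetric in Gallager's sense: the columns of the $2\times|\mathcal Y|$ transition matrix (rows indexed by inputs) can be partitioned into submatrices such that, in each submatrix, every row is a permutation of every other row and every column is a permutation of every other column. Inputs are equiprobable, $P_X(x_0)=P_X(x_1)=\tfrac12$, and all logarithms are base $2$. The capacity $C$ of the channel is the mutual information $I(X;Y)$ under this input distribution. For $\rho>-1$, Gallager's function is defined by $$F(\rho)=\sum_{x}\tfrac12\sum_{y:\,P_{Y|X}(y|x)>0}P_{Y|X}(y|x)\left(\frac{\tfrac12\sum_{x'}P_{Y|X}(y|x')^{1/(1+\rho)}}{P_{Y|X}(y|x)^{1/(1+\rho)}}\right)^{\rho},$$ and $E_0(\rho)=-\log F(\rho)$. Let $h(p)=-p\log p-(1-p)\log(1-p)$ denote the binary entropy function, and let $h^{-1}$ be its inverse on $[0,\tfrac12]$. For $C\in[0,1]$ define $$F^{\rm bec}(\rho;C)=1+(2^{-\rho}-1)C,$$ $$F^{\rm bsc}(\rho;C)=2^{-\rho}\Bigl(\varepsilon^{1/(1+\rho)}+(1-\varepsilon)^{1/(1+\rho)}\Bigr)^{1+\rho},\qquad \varepsilon=h^{-1}(1-C).$$ These are the values of $F(\rho)$ for the binary erasure channel (BEC) and the binary symmetric channel (BSC) of capacity $C$. For $\rho\ne0$, $C^{\rm bec}(\cdot)$ and $C^{\rm bsc}(\cdot)$ denote the inverse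 functions of $C\mapsto F^{\rm bec}(\rho;C)$ and $C\mapsto F^{\rm bsc}(\rho;C)$ on $[0,1]$, respectively. *)

theory Defs
  imports Complex_Main "HOL-Library.Multiset" "HOL-Library.Disjoint_Sets"
begin

text \<open>A channel with input alphabet {x0,x1} = {False,True} (x0 = False, x1 = True),
  finite output alphabet Y and transition probabilities W x y = P(y|x).\<close>

definition bims :: "'y set \<Rightarrow> (bool \<Rightarrow> 'y \<Rightarrow> real) \<Rightarrow> bool" where
  "bims Y W \<longleftrightarrow> finite Y
     \<and> (\<forall>x. \<forall>y\<in>Y. 0 \<le> W x y)
     \<and> (\<forall>x. (\<Sum>y\<in>Y. W x y) = 1)
     \<and> (\<exists>P. partition_on Y P \<and>
          (\<forall>B\<in>P. image_mset (W False) (mset_set B) = image_mset (W True) (mset_set B)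
                 \<and> (\<forall>y\<in>B. \<forall>y'\<in>B. {#W False y, W True y#} = {#W False y', W True y'#})))"

definition out_prob :: "(bool \<Rightarrow> 'y \<Rightarrow> real) \<Rightarrow> 'y \<Rightarrow> real" where
  "out_prob W y = (\<Sum>x\<in>UNIV. W x y / 2)"

definition capacity :: "'y set \<Rightarrow> (bool \<Rightarrow> 'y \<Rightarrow> real) \<Rightarrow> real" where
  "capacity Y W = (\<Sum>x\<in>UNIV. (1/2) * (\<Sum>y\<in>{y\<in>Y. W x y > 0}.
       W x y * log 2 (W x y / out_prob W y)))"

definition gallager_F :: "real \<Rightarrow> 'y set \<Rightarrow> (bool \<Rightarrow> 'y \<Rightarrow> real) \<Rightarrow> real" where
  "gallager_F \<rho> Y W = (\<Sum>x\<in>UNIV. (1/2) * (\<Sum>y\<in>{y\<in>Y. W x y > 0}.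
       W x y * (((1/2) * (\<Sum>x'\<in>UNIV. W x' y powr (1/(1+\<rho>)))) / W x y powr (1/(1+\<rho>))) powr \<rho>))"

definition E0 :: "real \<Rightarrow> 'y set \<Rightarrow> (bool \<Rightarrow> 'y \<Rightarrow> real) \<Rightarrow> real" where
  "E0 \<rho> Y W = - log 2 (gallager_F \<rho> Y W)"

definition h :: "real \<Rightarrow> real" where
  "h p = (if p = 0 \<or> p = 1 then 0 else - p * log 2 p - (1 - p) * log 2 (1 - p))"

definition h_inv :: "real \<Rightarrow> real" where
  "h_inv q = (THE p. p \<in> {0..1/2} \<and> h p = q)"

definition F_bec :: "real \<Rightarrow> real \<Rightarrow> real" where
  "F_bec \<rho> C = 1 + (2 powr (-\<rho>) - 1) * C"

definition F_bsc :: "real \<Rightarrow> real \<Rightarrow> real" where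
  "F_bsc \<rho> C = (let \<epsilon> = h_inv (1 - C) in
     2 powr (-\<rho>) * (\<epsilon> powr (1/(1+\<rho>)) + (1 - \<epsilon>) powr (1/(1+\<rho>))) powr (1+\<rho>))"

text \<open>Inverses of C \<mapsto> F_bec(rho;C), C \<mapsto> F_bsc(rho;C) on [0,1] (rho \<noteq> 0).\<close>
definition C_bec :: "real \<Rightarrow> real \<Rightarrow> real" where
  "C_bec \<rho> t = (THE C. C \<in> {0..1} \<and> F_bec \<rho> C = t)"

definition C_bsc :: "real \<Rightarrow> real \<Rightarrow> real" where
  "C_bsc \<rho> t = (THE C. C \<in> {0..1} \<and> F_bsc \<rho> C = t)"

definition bec_Y :: "nat set" where "bec_Y = {0, 1, 2}"
definition bec_W :: "real \<Rightarrow> bool \<Rightarrow> nat \<Rightarrow> real" where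
  "bec_W e x y = (if y = 2 then e else if y = (if x then 1 else 0) then 1 - e else 0)"

definition bsc_Y :: "nat set" where "bsc_Y = {0, 1}"
definition bsc_W :: "real \<Rightarrow> bool \<Rightarrow> nat \<Rightarrow> real" where
  "bsc_W \<epsilon> x y = (if y = (if x then 1 else 0) then 1 - \<epsilon> else \<epsilon>)"

end

theory Submission
  imports Defs
begin

lemma h_sym: "h (1 - p) = h p"
  unfolding h_def by (auto simp: algebra_simps)

lemma h_open: "0 < p \<Longrightarrow> p < 1 \<Longrightarrow> h p = - p * log 2 p - (1 - p) * log 2 (1 - p)"
  unfolding h_def by auto

lemma h_open': "0 < p \<Longrightarrow> p < 1 \<Longrightarrow> h p = - (p * ln p + (1 - p) * ln (1 - p)) / ln 2"
  unfolding h_def log_def by (auto simp: field_simps)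

lemma h_deriv:
  assumes "0 < p" "p < 1"
  shows "(h has_real_derivative log 2 ((1 - p) / p)) (at p)"
proof -
  have d1: "((\<lambda>x. x * ln x) has_real_derivative (ln p + 1)) (at p)"
    using assms by (auto intro!: derivative_eq_intros)
  have d2: "((\<lambda>x. (1 - x) * ln (1 - x)) has_real_derivative (- (ln (1 - p) + 1))) (at p)"
    using assms by (auto intro!: derivative_eq_intros)
  have d: "((\<lambda>x. - (x * ln x + (1 - x) * ln (1 - x)) / ln 2) has_real_derivative
      (- ((ln p + 1) + (- (ln (1 - p) + 1))) / ln 2)) (at p)"
    by (intro DERIV_cdivide DERIV_minus DERIV_add d1 d2)
  have e: "- ((ln p + 1) + (- (ln (1 - p) + 1))) / ln 2 = log 2 ((1 - p) / p)"
    using assms by (simp add: log_def ln_div)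
  have ev: "\<forall>\<^sub>F x in nhds p. h x = - (x * ln x + (1 - x) * ln (1 - x)) / ln 2"
  proof -
    have "open {0<..<(1::real)}" by simp
    then have "\<forall>\<^sub>F x in nhds p. x \<in> {0<..<1}" using assms by (intro eventually_nhds_in_open) auto
    then show ?thesis by eventually_elim (auto simp: h_open')
  qed
  show ?thesis
    using DERIV_cong_ev[OF refl ev refl, of "log 2 ((1 - p) / p)"] d[unfolded e] by simp
qed

lemma xlnx_lim: "((\<lambda>x::real. x * ln x) \<longlongrightarrow> 0) (at_right 0)"
proof -
  have "((\<lambda>x::real. ln (inverse x) / inverse x) \<longlongrightarrow> 0) (at_right 0)"
    by (rule filterlim_compose[OF ln_x_over_x_tendsto_0 filterlim_inverse_at_top_right])
  then have lim: "((\<lambda>x::real. - (ln (inverse x) / inverse x)) \<longlongrightarrow> 0) (at_right 0)"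
    using tendsto_minus by fastforce
  have e: "- (ln (inverse x) / inverse x) = x * ln x" if "x > 0" for x :: real
  proof -
    have "ln (inverse x) = - ln x" using that by (simp add: ln_inverse)
    moreover have "a / inverse x = a * x" for a using that by (simp add: divide_inverse)
    ultimately show ?thesis by simp
  qed
  have ev: "\<forall>\<^sub>F x in at_right 0. - (ln (inverse x) / inverse x) = x * ln (x::real)"
    unfolding eventually_at_right_field by (intro exI[of _ 1]) (auto simp: e)
  show ?thesis using lim tendsto_cong[OF ev] by simp
qed

lemma xlogx_lim: "((\<lambda>x::real. x * log 2 x) \<longlongrightarrow> 0) (at_right 0)"
proof -
  have "((\<lambda>x::real. (x * ln x) / ln 2) \<longlongrightarrow> 0 / ln 2) (at_right 0)"
    by (intro tendsto_divide xlnx_lim tendsto_const) auto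
  then show ?thesis by (simp add: log_def)
qed

lemma h_cont: "continuous_on {0..1/2} h"
proof -
  have "continuous (at x within {0..1/2}) h" if x: "x \<in> {0..1/2}" for x
  proof (cases "x = 0")
    case False
    then have "0 < x" "x < 1" using x by auto
    then show ?thesis using h_deriv[of x]
      by (meson DERIV_isCont continuous_at_imp_continuous_at_within)
  next
    case True
    have "((\<lambda>x. - (x * log 2 x) - (1 - x) * log 2 (1 - x)) \<longlongrightarrow> - 0 - (1 - 0) * log 2 (1 - 0)) (at_right 0)"
      by (intro tendsto_intros xlogx_lim) auto
    then have 1: "((\<lambda>x. - (x * log 2 x) - (1 - x) * log 2 (1 - x)) \<longlongrightarrow> 0) (at_right 0)" by simp
    have 2: "\<forall>\<^sub>F x in at_right 0. - (x * log 2 x) - (1 - x) * log 2 (1 - x) = h x"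
      unfolding eventually_at_right_field by (intro exI[of _ 1]) (auto simp: h_open)
    have "(h \<longlongrightarrow> 0) (at_right 0)" using tendsto_cong[OF 2] 1 by simp
    then show ?thesis using True unfolding continuous_within
      by (simp add: h_def at_within_Icc_at_right)
  qed
  then show ?thesis by (simp add: continuous_on_eq_continuous_within)
qed

lemma h_0[simp]: "h 0 = 0" and h_1[simp]: "h 1 = 0" unfolding h_def by auto

lemma h_half[simp]: "h (1/2) = 1"
proof -
  have "log 2 (1/2) = -1" by (simp add: log_divide)
  then show ?thesis unfolding h_def by simp
qed

lemma h_strict_mono:
  assumes "0 \<le> a" "a < b" "b \<le> 1/2"
  shows "h a < h b"
proof (rule DERIV_pos_imp_increasing_open[OF assms(2)])
  fix x assume x: "a < x" "x < b"
  then have "0 < x" "x < 1/2" using assms by auto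
  then have "1 < (1 - x) / x" by (simp add: field_simps)
  then have "log 2 ((1 - x) / x) > 0" by simp
  then show "\<exists>y. (h has_real_derivative y) (at x) \<and> 0 < y"
    using h_deriv[of x] \<open>0 < x\<close> \<open>x < 1/2\<close> by auto
next
  show "continuous_on {a..b} h" using h_cont by (rule continuous_on_subset) (use assms in auto)
qed

lemma h_mono:
  assumes "0 \<le> a" "a \<le> b" "b \<le> 1/2"
  shows "h a \<le> h b"
  using h_strict_mono[of a b] assms by (cases "a = b") auto

lemma h_bounds_half:
  assumes "0 \<le> p" "p \<le> 1/2"
  shows "0 \<le> h p \<and> h p \<le> 1"
  using h_mono[of 0 p] h_mono[of p "1/2"] assms by auto

lemma h_bounds:
  assumes "0 \<le> p" "p \<le> 1"
  shows "0 \<le> h p \<and> h p \<le> 1"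
proof (cases "p \<le> 1/2")
  case True then show ?thesis using h_bounds_half assms by auto
next
  case False then show ?thesis using h_bounds_half[of "1 - p"] assms h_sym[of p] by auto
qed

lemma h_surj:
  assumes "0 \<le> q" "q \<le> 1"
  shows "\<exists>p. 0 \<le> p \<and> p \<le> 1/2 \<and> h p = q"
proof -
  have "\<exists>x\<ge>0. x \<le> 1/2 \<and> h x = q"
    by (rule IVT') (use assms h_cont in auto)
  then show ?thesis by auto
qed

lemma h_inj:
  assumes "0 \<le> a" "a \<le> 1/2" "0 \<le> b" "b \<le> 1/2" "h a = h b"
  shows "a = b"
  using h_strict_mono[of a b] h_strict_mono[of b a] assms by (cases a b rule: linorder_cases) auto

lemma h_inv:
  assumes "0 \<le> q" "q \<le> 1"
  shows "0 \<le> h_inv q \<and> h_inv q \<le> 1/2 \<and> h (h_inv q) = q"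
proof -
  obtain p where p: "0 \<le> p" "p \<le> 1/2" "h p = q" using h_surj assms by blast
  have "(THE p. p \<in> {0..1/2} \<and> h p = q) = p"
    by (rule the_equality) (use p h_inj in auto)
  then show ?thesis unfolding h_inv_def using p by simp
qed

lemma h_inv_h:
  assumes "0 \<le> p" "p \<le> 1/2"
  shows "h_inv (h p) = p"
  using h_inv[of "h p"] h_bounds_half[OF assms] h_inj[of "h_inv (h p)" p] assms by auto

lemma h_inv_mono:
  assumes "0 \<le> q1" "q1 \<le> q2" "q2 \<le> 1"
  shows "h_inv q1 \<le> h_inv q2"
proof (rule ccontr)
  assume "\<not> ?thesis"
  then have "h (h_inv q2) < h (h_inv q1)"
    using h_strict_mono[of "h_inv q2" "h_inv q1"] h_inv[of q1] h_inv[of q2] assms by auto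
  then show False using h_inv[of q1] h_inv[of q2] assms by auto
qed

lemma h_zero_iff:
  assumes "0 \<le> p" "p \<le> 1" "h p = 0"
  shows "p = 0 \<or> p = 1"
proof (cases "p \<le> 1/2")
  case True then show ?thesis using h_inj[of p 0] assms by auto
next
  case False then show ?thesis using h_inj[of "1 - p" 0] assms h_sym[of p] by auto
qed

lemma h_one_iff:
  assumes "0 \<le> p" "p \<le> 1" "h p = 1"
  shows "p = 1/2"
proof (cases "p \<le> 1/2")
  case True then show ?thesis using h_inj[of p "1/2"] assms by auto
next
  case False then show ?thesis using h_inj[of "1 - p" "1/2"] assms h_sym[of p] by auto
qed

lemma Dlem:
  fixes c y :: real
  assumes c: "c \<ge> 0" and y: "y \<ge> - c"
  shows "sinh y * cosh c \<le> y * cosh (c + y)"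
proof -
  define E where "E = (\<lambda>y. y * cosh (c + y) - sinh y * cosh c)"
  have dE: "(E has_real_derivative (sinh c * sinh x + x * sinh (c + x))) (at x)" for x
  proof -
    have "(E has_real_derivative (cosh (c + x) + x * sinh (c + x) - cosh x * cosh c)) (at x)"
      unfolding E_def by (auto intro!: derivative_eq_intros)
    moreover have "cosh (c + x) + x * sinh (c + x) - cosh x * cosh c
        = sinh c * sinh x + x * sinh (c + x)"
      by (simp add: cosh_add algebra_simps)
    ultimately show ?thesis by simp
  qed
  have E0: "E 0 = 0" unfolding E_def by simp
  show ?thesis
  proof (cases "y \<ge> 0")
    case True
    have "E 0 \<le> E y"
    proof (rule DERIV_nonneg_imp_nondecreasing[of 0 y E, OF True])
      fix x assume x: "0 \<le> x" "x \<le> y"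
      have "0 \<le> sinh c * sinh x" using c x by simp
      moreover have "0 \<le> x * sinh (c + x)" using c x by simp
      ultimately show "\<exists>d. (E has_real_derivative d) (at x) \<and> 0 \<le> d" using dE by fastforce
    qed
    then show ?thesis using E0 unfolding E_def by simp
  next
    case False
    have "E y \<ge> E 0"
    proof (rule DERIV_nonpos_imp_nonincreasing[of y 0 E])
      show "y \<le> 0" using False by simp
    next
      fix x assume x: "y \<le> x" "x \<le> 0"
      have "sinh c * sinh x \<le> 0" using c x by (simp add: mult_nonneg_nonpos)
      moreover have "x * sinh (c + x) \<le> 0" using c x y by (simp add: mult_nonpos_nonneg)
      ultimately show "\<exists>d. (E has_real_derivative d) (at x) \<and> d \<le> 0" using dE by fastforce
    qed
    then show ?thesis using E0 unfolding E_def by simp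
  qed
qed

definition Theta :: "real \<Rightarrow> real \<Rightarrow> real" where
  "Theta \<rho> b = cosh b powr \<rho> * sinh (\<rho> * b) / b"

lemma Theta_mono:
  assumes r: "\<rho> > -1" and b: "0 < b1" "b1 \<le> b2"
  shows "Theta \<rho> b1 \<le> Theta \<rho> b2"
  unfolding Theta_def
proof (rule DERIV_nonneg_imp_nondecreasing[OF b(2)])
  fix x assume x: "b1 \<le> x" "x \<le> b2"
  then have x0: "x > 0" using b by simp
  define N where "N = cosh x powr \<rho> * sinh (\<rho> * x)"
  define N' where "N' = \<rho> * cosh x powr (\<rho> - 1) * sinh x * sinh (\<rho> * x) + cosh x powr \<rho> * (cosh (\<rho> * x) * \<rho>)"
  have dN: "((\<lambda>x. cosh x powr \<rho> * sinh (\<rho> * x)) has_real_derivative N') (at x)"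
  proof -
    have "((\<lambda>x. cosh x powr \<rho>) has_real_derivative \<rho> * cosh x powr (\<rho> - of_nat 1) * sinh x) (at x)"
      by (rule DERIV_fun_powr) (auto intro!: derivative_eq_intros)
    then have d1: "((\<lambda>x. cosh x powr \<rho>) has_real_derivative \<rho> * cosh x powr (\<rho> - 1) * sinh x) (at x)"
      by simp
    have d2: "((\<lambda>x. sinh (\<rho> * x)) has_real_derivative cosh (\<rho> * x) * \<rho>) (at x)"
      by (auto intro!: derivative_eq_intros)
    show ?thesis using DERIV_mult[OF d1 d2] unfolding N'_def by (simp add: algebra_simps)
  qed
  have d: "((\<lambda>x. cosh x powr \<rho> * sinh (\<rho> * x) / x) has_real_derivative (N' * x - N * 1) / (x * x)) (at x)"
    using DERIV_divide[OF dN DERIV_ident] x0 unfolding N_def by simp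
  have key: "N' * x - N * 1 = cosh x powr (\<rho> - 1) * (\<rho> * x * cosh (x + \<rho> * x) - sinh (\<rho> * x) * cosh x)"
  proof -
    have cp: "cosh x powr \<rho> = cosh x powr (\<rho> - 1) * cosh x"
      using powr_add[of "cosh x" "\<rho> - 1" 1] by simp
    show ?thesis unfolding N'_def N_def cp by (simp add: cosh_add algebra_simps)
  qed
  have "sinh (\<rho> * x) * cosh x \<le> (\<rho> * x) * cosh (x + \<rho> * x)"
  proof (rule Dlem)
    have "(\<rho> + 1) * x > 0" using x0 r by simp
    then show "\<rho> * x \<ge> - x" by (simp add: algebra_simps)
  qed (use x0 in auto)
  then have "N' * x - N * 1 \<ge> 0" unfolding key by (simp add: algebra_simps)
  then have "(N' * x - N * 1) / (x * x) \<ge> 0" by simp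
  then show "\<exists>y. ((\<lambda>x. cosh x powr \<rho> * sinh (\<rho> * x) / x) has_real_derivative y) (at x) \<and> 0 \<le> y"
    using d by blast
qed

definition ff :: "real \<Rightarrow> real \<Rightarrow> real" where
  "ff \<rho> p = 2 powr (-\<rho>) * (p powr (1/(1+\<rho>)) + (1 - p) powr (1/(1+\<rho>))) powr (1+\<rho>)"

definition bb :: "real \<Rightarrow> real \<Rightarrow> real" where
  "bb \<rho> p = ln ((1 - p) / p) / (2 * (1 + \<rho>))"

definition DF :: "real \<Rightarrow> real \<Rightarrow> real" where
  "DF \<rho> p = 2 * cosh (bb \<rho> p) powr \<rho> * sinh (\<rho> * bb \<rho> p)"

lemma exp_sum_cosh: "exp (x::real) + exp y = 2 * exp ((x + y) / 2) * cosh ((x - y) / 2)"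
proof -
  have "exp ((x + y) / 2) * exp ((x - y) / 2) = exp x" by (simp add: exp_add[symmetric] field_simps)
  moreover have "exp ((x + y) / 2) * exp (- ((x - y) / 2)) = exp y" by (simp add: exp_add[symmetric] field_simps)
  ultimately show ?thesis by (simp add: cosh_field_def algebra_simps)
qed

lemma exp_diff_sinh: "exp (x::real) - exp y = 2 * exp ((x + y) / 2) * sinh ((x - y) / 2)"
proof -
  have "exp ((x + y) / 2) * exp ((x - y) / 2) = exp x" by (simp add: exp_add[symmetric] field_simps)
  moreover have "exp ((x + y) / 2) * exp (- ((x - y) / 2)) = exp y" by (simp add: exp_add[symmetric] field_simps)
  ultimately show ?thesis by (simp add: sinh_field_def algebra_simps)
qed

lemma DF_identity:
  assumes r: "\<rho> > -1" and p: "0 < p" "p < 1"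
  shows "2 powr (-\<rho>) * (p powr (1/(1+\<rho>)) + (1 - p) powr (1/(1+\<rho>))) powr \<rho>
          * (p powr (1/(1+\<rho>) - 1) - (1 - p) powr (1/(1+\<rho>) - 1)) = DF \<rho> p"
proof -
  define s where "s = 1 / (1 + \<rho>)"
  define L where "L = ln p"
  define M where "M = ln (1 - p)"
  define b where "b = bb \<rho> p"
  have s0: "s > 0" unfolding s_def using r by simp
  have rs: "\<rho> * s = 1 - s" unfolding s_def using r by (simp add: field_simps)
  have b: "b = s * (M - L) / 2" unfolding b_def bb_def s_def L_def M_def using p r
    by (simp add: ln_div field_simps)
  have pw: "x powr a = exp (a * ln x)" if "x > 0" for x a :: real using that by (simp add: powr_def)
  have S: "p powr s + (1 - p) powr s = 2 * exp (s * (L + M) / 2) * cosh b"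
  proof -
    have "p powr s + (1 - p) powr s = exp (s * L) + exp (s * M)" using p by (simp add: pw L_def M_def)
    also have "\<dots> = 2 * exp ((s * L + s * M) / 2) * cosh ((s * L - s * M) / 2)" by (rule exp_sum_cosh)
    also have "cosh ((s * L - s * M) / 2) = cosh b"
    proof -
      have "(s * L - s * M) / 2 = - b" unfolding b by (simp add: field_simps)
      then show ?thesis by simp
    qed
    finally show ?thesis by (simp add: algebra_simps)
  qed
  have Sp: "(p powr s + (1 - p) powr s) powr \<rho> = 2 powr \<rho> * cosh b powr \<rho> * exp (\<rho> * (s * (L + M) / 2))"
    unfolding S by (simp add: powr_mult exp_powr_real algebra_simps)
  have Dd: "p powr (s - 1) - (1 - p) powr (s - 1) = 2 * exp ((s - 1) * (L + M) / 2) * sinh (\<rho> * b)"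
  proof -
    have "p powr (s - 1) - (1 - p) powr (s - 1) = exp ((s - 1) * L) - exp ((s - 1) * M)"
      using p by (simp add: pw L_def M_def)
    also have "\<dots> = 2 * exp (((s - 1) * L + (s - 1) * M) / 2) * sinh (((s - 1) * L - (s - 1) * M) / 2)"
      by (rule exp_diff_sinh)
    also have "((s - 1) * L - (s - 1) * M) / 2 = \<rho> * b"
    proof -
      have "\<rho> * b = (\<rho> * s) * (M - L) / 2" unfolding b by simp
      also have "\<dots> = (1 - s) * (M - L) / 2" using rs by simp
      finally show ?thesis by (simp add: algebra_simps)
    qed
    finally show ?thesis by (simp add: algebra_simps)
  qed
  have ex: "exp (\<rho> * (s * (L + M) / 2)) * exp ((s - 1) * (L + M) / 2) = 1"
  proof -
    have "\<rho> * (s * (L + M) / 2) + (s - 1) * (L + M) / 2 = (\<rho> * s + s - 1) * (L + M) / 2"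
      by (simp add: field_simps)
    also have "\<rho> * s + s - 1 = 0" using rs by simp
    finally have "\<rho> * (s * (L + M) / 2) + (s - 1) * (L + M) / 2 = 0" by simp
    then show ?thesis by (simp add: exp_add[symmetric])
  qed
  have "2 powr (-\<rho>) * 2 powr \<rho> = 1" by (simp add: powr_add[symmetric])
  then show ?thesis
    unfolding s_def[symmetric] Sp Dd DF_def b_def[symmetric]
    using ex by (simp add: algebra_simps)
qed

lemma ff_deriv:
  assumes r: "\<rho> > -1" and p: "0 < p" "p < 1"
  shows "(ff \<rho> has_real_derivative DF \<rho> p) (at p)"
proof -
  define s where "s = 1 / (1 + \<rho>)"
  have s0: "s > 0" unfolding s_def using r by simp
  have rs: "(1 + \<rho>) * s = 1" unfolding s_def using r by simp
  have d1: "((\<lambda>x. x powr s) has_real_derivative s * p powr (s - 1)) (at p)"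
    using has_real_derivative_powr[of p s] p by simp
  have d2': "((\<lambda>x. (1 - x) powr s) has_real_derivative s * (1 - p) powr (s - of_nat 1) * (0 - 1)) (at p)"
    by (rule DERIV_fun_powr) (use p in \<open>auto intro!: derivative_eq_intros\<close>)
  have d2: "((\<lambda>x. (1 - x) powr s) has_real_derivative - (s * (1 - p) powr (s - 1))) (at p)"
    using d2' by simp
  define S' where "S' = s * p powr (s - 1) + - (s * (1 - p) powr (s - 1))"
  have dS: "((\<lambda>x. x powr s + (1 - x) powr s) has_real_derivative S') (at p)"
    unfolding S'_def by (rule DERIV_add[OF d1 d2])
  have Spos: "p powr s + (1 - p) powr s > 0" using p by (intro add_pos_nonneg) auto
  have d3': "((\<lambda>x. (x powr s + (1 - x) powr s) powr (1 + \<rho>)) has_real_derivative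
      (1 + \<rho>) * (p powr s + (1 - p) powr s) powr (1 + \<rho> - of_nat 1) * S') (at p)"
    by (rule DERIV_fun_powr[OF dS Spos])
  have d4: "(ff \<rho> has_real_derivative 2 powr (-\<rho>) * ((1 + \<rho>) * (p powr s + (1 - p) powr s) powr (1 + \<rho> - of_nat 1) * S')) (at p)"
    unfolding ff_def s_def[symmetric] by (rule DERIV_cmult[OF d3'])
  have e1: "(1 + \<rho>) * S' = ((1 + \<rho>) * s) * p powr (s - 1) - ((1 + \<rho>) * s) * (1 - p) powr (s - 1)"
    unfolding S'_def by (simp add: algebra_simps)
  have e2: "(1 + \<rho>) * S' = p powr (s - 1) - (1 - p) powr (s - 1)"
    using e1 unfolding rs by simp
  have e: "2 powr (-\<rho>) * ((1 + \<rho>) * (p powr s + (1 - p) powr s) powr (1 + \<rho> - of_nat 1) * S') = DF \<rho> p"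
  proof -
    have "2 powr (-\<rho>) * ((1 + \<rho>) * (p powr s + (1 - p) powr s) powr (1 + \<rho> - of_nat 1) * S')
        = 2 powr (-\<rho>) * (p powr s + (1 - p) powr s) powr \<rho> * ((1 + \<rho>) * S')"
      by simp
    also have "\<dots> = 2 powr (-\<rho>) * (p powr s + (1 - p) powr s) powr \<rho> * (p powr (s - 1) - (1 - p) powr (s - 1))"
      unfolding e2 ..
    also have "\<dots> = DF \<rho> p" unfolding s_def by (rule DF_identity[OF r p])
    finally show ?thesis .
  qed
  from d4[unfolded e] show ?thesis .
qed

lemma ff_sym: "ff \<rho> (1 - p) = ff \<rho> p"
  unfolding ff_def by (simp add: add.commute)

lemma ff_0: "\<rho> > -1 \<Longrightarrow> ff \<rho> 0 = 2 powr (-\<rho>)"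
  unfolding ff_def by simp

lemma ff_1: "\<rho> > -1 \<Longrightarrow> ff \<rho> 1 = 2 powr (-\<rho>)"
  using ff_sym[of \<rho> 0] ff_0 by simp

lemma ff_half:
  assumes r: "\<rho> > -1"
  shows "ff \<rho> (1/2) = 1"
proof -
  define s where "s = 1 / (1 + \<rho>)"
  have rs: "(1 + \<rho>) * s = 1" unfolding s_def using r by simp
  have "(1/2::real) powr s + (1 - 1/2) powr s = 2 * (2 powr (- s))"
    by (simp add: powr_divide powr_minus_divide)
  also have "\<dots> = 2 powr (1 - s)"
    by (simp add: powr_diff powr_minus_divide)
  finally have "((1/2::real) powr s + (1 - 1/2) powr s) powr (1 + \<rho>) = 2 powr ((1 - s) * (1 + \<rho>))"
    by (simp add: powr_powr)
  also have "(1 - s) * (1 + \<rho>) = \<rho>" using rs by (simp add: algebra_simps)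
  finally have "((1/2::real) powr s + (1 - 1/2) powr s) powr (1 + \<rho>) = 2 powr \<rho>" .
  then show ?thesis unfolding ff_def s_def[symmetric] by (simp add: powr_minus)
qed

lemma ff_cont:
  assumes r: "\<rho> > -1"
  shows "continuous_on {0..1} (ff \<rho>)"
proof -
  have s0: "1 / (1 + \<rho>) > 0" using r by simp
  have c1: "continuous_on {0..1} (\<lambda>p::real. p powr (1/(1+\<rho>)) + (1 - p) powr (1/(1+\<rho>)))"
    by (intro continuous_intros continuous_on_powr') (use s0 in auto)
  have pos: "p powr (1/(1+\<rho>)) + (1 - p) powr (1/(1+\<rho>)) > 0" if "p \<in> {0..1}" for p :: real
  proof (cases "p = 0")
    case True then show ?thesis by simp
  next
    case False then have "p > 0" using that by auto
    then show ?thesis using that by (intro add_pos_nonneg) auto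
  qed
  have "continuous_on {0..1} (\<lambda>p::real. (p powr (1/(1+\<rho>)) + (1 - p) powr (1/(1+\<rho>))) powr (1 + \<rho>))"
    by (rule continuous_on_powr'[OF c1 continuous_on_const]) (use pos in fastforce)
  then show ?thesis unfolding ff_def by (rule continuous_on_mult_left)
qed

lemma bb_pos: "0 < p \<Longrightarrow> p < 1/2 \<Longrightarrow> \<rho> > -1 \<Longrightarrow> bb \<rho> p > 0"
  unfolding bb_def by (intro divide_pos_pos ln_gt_zero) (auto simp: field_simps)

lemma bb_anti:
  assumes "0 < p1" "p1 < p2" "p2 < 1" "\<rho> > -1"
  shows "bb \<rho> p2 < bb \<rho> p1"
proof -
  have "(1 - p2) / p2 < (1 - p1) / p1" using assms by (simp add: field_simps)
  then have "ln ((1 - p2) / p2) < ln ((1 - p1) / p1)" using assms by (intro ln_less_cancel_iff[THEN iffD2]) auto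
  then show ?thesis unfolding bb_def using assms by (intro divide_strict_right_mono) auto
qed

lemma DF_Theta:
  assumes r: "\<rho> > -1" and p: "0 < p" "p < 1/2"
  shows "DF \<rho> p = ln ((1 - p) / p) * Theta \<rho> (bb \<rho> p) / (1 + \<rho>)"
proof -
  have b: "bb \<rho> p > 0" using bb_pos p r by simp
  have t: "ln ((1 - p) / p) = 2 * (1 + \<rho>) * bb \<rho> p" unfolding bb_def using r by simp
  define X where "X = cosh (bb \<rho> p) powr \<rho> * sinh (\<rho> * bb \<rho> p)"
  have r1: "1 + \<rho> \<noteq> 0" using r by simp
  have e1: "bb \<rho> p * (X / bb \<rho> p) = X" using b by simp
  have e2: "2 * (1 + \<rho>) * Y / (1 + \<rho>) = 2 * Y" for Y
    using r1 by (metis mult.commute nonzero_mult_div_cancel_left times_divide_eq_right)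
  have "2 * (1 + \<rho>) * bb \<rho> p * (X / bb \<rho> p) / (1 + \<rho>) = 2 * (1 + \<rho>) * (bb \<rho> p * (X / bb \<rho> p)) / (1 + \<rho>)"
    by (simp only: mult.assoc)
  also have "\<dots> = 2 * X" unfolding e1 e2 ..
  finally have "ln ((1 - p) / p) * Theta \<rho> (bb \<rho> p) / (1 + \<rho>) = 2 * X"
    unfolding t Theta_def X_def[symmetric] .
  moreover have "DF \<rho> p = 2 * X" unfolding DF_def X_def by simp
  ultimately show ?thesis by simp
qed

lemma DF_sign_pos:
  assumes "\<rho> > 0" "0 < p" "p < 1/2"
  shows "DF \<rho> p > 0"
  using bb_pos[of p \<rho>] assms unfolding DF_def by simp

lemma DF_sign_neg:
  assumes "\<rho> < 0" "\<rho> > -1" "0 < p" "p < 1/2"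
  shows "DF \<rho> p < 0"
proof -
  have "\<rho> * bb \<rho> p < 0" using bb_pos[of p \<rho>] assms by (simp add: mult_neg_pos)
  then show ?thesis using assms unfolding DF_def by (simp add: mult_pos_neg)
qed

lemma alg1:
  fixes A B C t0 l c :: real
  assumes "t0 \<noteq> 0" "l \<noteq> 0" "c \<noteq> 0"
  shows "A * B / c - t0 * C / c * l / t0 * (A / l) = A / c * (B - C)"
  using assms by (simp add: field_simps)

lemma tangent_half:
  assumes r: "\<rho> > -1" and p0: "0 < p0" "p0 < 1/2" and p: "0 \<le> p" "p \<le> 1/2"
  shows "ff \<rho> p + (- DF \<rho> p0 * ln 2 / ln ((1 - p0) / p0)) * h p
       \<le> ff \<rho> p0 + (- DF \<rho> p0 * ln 2 / ln ((1 - p0) / p0)) * h p0"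
proof -
  define t0 where "t0 = ln ((1 - p0) / p0)"
  define k where "k = - DF \<rho> p0 * ln 2 / t0"
  define \<phi> where "\<phi> = (\<lambda>x. ff \<rho> x + k * h x)"
  have t0: "t0 > 0" unfolding t0_def using p0 by (intro ln_gt_zero) (auto simp: field_simps)
  have r1: "1 + \<rho> > 0" using r by simp
  have DF0: "DF \<rho> p0 = t0 * Theta \<rho> (bb \<rho> p0) / (1 + \<rho>)" unfolding t0_def by (rule DF_Theta[OF r p0])
  have dphi: "(\<phi> has_real_derivative (ln ((1 - x) / x) / (1 + \<rho>)) * (Theta \<rho> (bb \<rho> x) - Theta \<rho> (bb \<rho> p0))) (at x)"
    if x: "0 < x" "x < 1/2" for x
  proof -
    have d: "(\<phi> has_real_derivative DF \<rho> x + k * log 2 ((1 - x) / x)) (at x)"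
      unfolding \<phi>_def using x by (intro DERIV_add DERIV_cmult ff_deriv[OF r] h_deriv) auto
    have "DF \<rho> x + k * log 2 ((1 - x) / x)
        = ln ((1 - x) / x) * Theta \<rho> (bb \<rho> x) / (1 + \<rho>) - t0 * Theta \<rho> (bb \<rho> p0) / (1 + \<rho>) * ln 2 / t0 * (ln ((1 - x) / x) / ln 2)"
      unfolding k_def DF0 DF_Theta[OF r x] log_def by simp
    also have "\<dots> = (ln ((1 - x) / x) / (1 + \<rho>)) * (Theta \<rho> (bb \<rho> x) - Theta \<rho> (bb \<rho> p0))"
      by (rule alg1) (use t0 r1 in auto)
    finally show ?thesis using d by simp
  qed
  have cont: "continuous_on {a..b} \<phi>" if "0 \<le> a" "b \<le> 1/2" for a b
    unfolding \<phi>_def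
    by (intro continuous_intros continuous_on_subset[OF ff_cont[OF r]] continuous_on_subset[OF h_cont])
      (use that in auto)
  have tpos: "ln ((1 - x) / x) > 0" if "0 < x" "x < 1/2" for x :: real
    using that by (intro ln_gt_zero) (auto simp: field_simps)
  show ?thesis
  proof (cases "p \<le> p0")
    case True
    have "\<phi> p \<le> \<phi> p0"
    proof (rule DERIV_nonneg_imp_increasing_open[OF True _ cont])
      fix x assume x: "p < x" "x < p0"
      then have x': "0 < x" "x < 1/2" using p p0 by auto
      have "bb \<rho> p0 \<le> bb \<rho> x" using bb_anti[of x p0 \<rho>] x p0 r x' by auto
      then have "Theta \<rho> (bb \<rho> p0) \<le> Theta \<rho> (bb \<rho> x)"
        using Theta_mono[OF r bb_pos[OF p0 r]] by simp
      then have "0 \<le> (ln ((1 - x) / x) / (1 + \<rho>)) * (Theta \<rho> (bb \<rho> x) - Theta \<rho> (bb \<rho> p0))"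
        using tpos[OF x'] r1 by simp
      then show "\<exists>y. (\<phi> has_real_derivative y) (at x) \<and> 0 \<le> y" using dphi[OF x'] by blast
    qed (use p p0 in auto)
    then show ?thesis unfolding \<phi>_def k_def t0_def .
  next
    case False
    have "\<phi> p0 \<ge> \<phi> p"
    proof (rule DERIV_nonpos_imp_decreasing_open[of p0 p, OF _ _ cont])
      fix x assume x: "p0 < x" "x < p"
      then have x': "0 < x" "x < 1/2" using p p0 by auto
      have "bb \<rho> x \<le> bb \<rho> p0" using bb_anti[of p0 x \<rho>] x p0 r x' by auto
      then have "Theta \<rho> (bb \<rho> x) \<le> Theta \<rho> (bb \<rho> p0)"
        using Theta_mono[OF r bb_pos[OF x' r]] by simp
      then have "(ln ((1 - x) / x) / (1 + \<rho>)) * (Theta \<rho> (bb \<rho> x) - Theta \<rho> (bb \<rho> p0)) \<le> 0"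
        using tpos[OF x'] r1 by (intro mult_nonneg_nonpos) auto
      then show "\<exists>y. (\<phi> has_real_derivative y) (at x) \<and> y \<le> 0" using dphi[OF x'] by blast
    qed (use p p0 False in auto)
    then show ?thesis unfolding \<phi>_def k_def t0_def by simp
  qed
qed

lemma tangent:
  assumes r: "\<rho> > -1" and p0: "0 < p0" "p0 < 1/2" and p: "0 \<le> p" "p \<le> 1"
  shows "ff \<rho> p + (- DF \<rho> p0 * ln 2 / ln ((1 - p0) / p0)) * h p
       \<le> ff \<rho> p0 + (- DF \<rho> p0 * ln 2 / ln ((1 - p0) / p0)) * h p0"
proof (cases "p \<le> 1/2")
  case True then show ?thesis using tangent_half[OF r p0] p by simp
next
  case False
  then show ?thesis using tangent_half[OF r p0, of "1 - p"] p by (simp add: ff_sym h_sym)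
qed

lemma cap_point:
  fixes a b :: real
  assumes a: "a \<ge> 0" and b: "b \<ge> 0"
  shows "(1/2) * ((if a > 0 then a * log 2 (a / (a/2 + b/2)) else 0)
               + (if b > 0 then b * log 2 (b / (a/2 + b/2)) else 0))
         = (a + b) / 2 * (1 - h (a / (a + b)))"
proof (cases "a > 0 \<and> b > 0")
  case True
  define c where "c = a + b"
  have c: "c > 0" unfolding c_def using True by simp
  define p where "p = a / c"
  have p: "0 < p" "p < 1" unfolding p_def c_def using True by (auto simp: field_simps)
  have q: "1 - p = b / c" unfolding p_def c_def using True by (simp add: field_simps)
  have la: "log 2 (a / (a/2 + b/2)) = 1 + log 2 p"
  proof -
    have "a / (a/2 + b/2) = 2 * p" unfolding p_def c_def by (simp add: field_simps)
    then show ?thesis using p by (simp add: log_mult)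
  qed
  have lb: "log 2 (b / (a/2 + b/2)) = 1 + log 2 (1 - p)"
  proof -
    have "b / (a/2 + b/2) = 2 * (1 - p)" unfolding q c_def by (simp add: field_simps)
    moreover have "log 2 (2 * (1 - p)) = 1 + log 2 (1 - p)" using p by (subst log_mult) auto
    ultimately show ?thesis by simp
  qed
  have ha: "a = c * p" unfolding p_def using c by auto
  have hb: "b = c * (1 - p)" unfolding q using c by auto
  have "(1/2) * ((if a > 0 then a * log 2 (a / (a/2 + b/2)) else 0)
               + (if b > 0 then b * log 2 (b / (a/2 + b/2)) else 0))
      = (1/2) * (c * p * (1 + log 2 p) + c * (1 - p) * (1 + log 2 (1 - p)))"
    using True unfolding la lb by (simp add: ha[symmetric] hb[symmetric])
  also have "\<dots> = c / 2 * (1 - h p)" using p by (simp add: h_open algebra_simps)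
  finally show ?thesis unfolding c_def p_def by simp
next
  case False
  then consider "a = 0" | "b = 0" using a b by linarith
  then show ?thesis
  proof cases
    case 1
    then show ?thesis using b by (cases "b > 0") (auto simp: log_divide)
  next
    case 2
    then show ?thesis using a by (cases "a > 0") (auto simp: log_divide)
  qed
qed

lemma F_term:
  fixes x M s \<rho> :: real
  assumes x: "x > 0" and M: "M > 0" and rs: "1 - s * \<rho> = s"
  shows "x * (M / x powr s) powr \<rho> = x powr s * M powr \<rho>"
proof -
  have "x * (M / x powr s) powr \<rho> = x powr 1 * (M powr \<rho> / x powr (s * \<rho>))"
    using x M by (simp add: powr_divide powr_powr)
  also have "\<dots> = x powr (1 - s * \<rho>) * M powr \<rho>" by (simp add: powr_diff)
  finally show ?thesis unfolding rs .
qed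

lemma F_point:
  fixes a b :: real
  assumes a: "a \<ge> 0" and b: "b \<ge> 0" and r: "\<rho> > -1"
  shows "(1/2) * ((if a > 0 then a * (((1/2) * (a powr (1/(1+\<rho>)) + b powr (1/(1+\<rho>)))) / a powr (1/(1+\<rho>))) powr \<rho> else 0)
               + (if b > 0 then b * (((1/2) * (a powr (1/(1+\<rho>)) + b powr (1/(1+\<rho>)))) / b powr (1/(1+\<rho>))) powr \<rho> else 0))
         = (a + b) / 2 * ff \<rho> (a / (a + b))"
proof (cases "a + b > 0")
  case False
  then have "a = 0" "b = 0" using a b by auto
  then show ?thesis by simp
next
  case True
  define s where "s = 1 / (1 + \<rho>)"
  define c where "c = a + b"
  define M where "M = (1/2) * (a powr s + b powr s)"
  have c: "c > 0" unfolding c_def using True .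
  have s0: "s > 0" unfolding s_def using r by simp
  have rs1: "(1 + \<rho>) * s = 1" unfolding s_def using r by simp
  then have rs: "1 - s * \<rho> = s" by (simp add: algebra_simps)
  have M: "M > 0"
  proof (cases "a > 0")
    case True then show ?thesis unfolding M_def using b by (intro mult_pos_pos add_pos_nonneg) auto
  next
    case False then have "b > 0" using a c unfolding c_def by auto
    then show ?thesis unfolding M_def using a by (intro mult_pos_pos add_nonneg_pos) auto
  qed
  have ta: "(if a > 0 then a * (M / a powr s) powr \<rho> else 0) = a powr s * M powr \<rho>"
    using F_term[OF _ M rs, of a] a by auto
  have tb: "(if b > 0 then b * (M / b powr s) powr \<rho> else 0) = b powr s * M powr \<rho>"
    using F_term[OF _ M rs, of b] b by auto
  have L: "(1/2) * ((if a > 0 then a * (M / a powr s) powr \<rho> else 0) + (if b > 0 then b * (M / b powr s) powr \<rho> else 0))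
      = M powr (1 + \<rho>)"
  proof -
    have "(1/2) * (a powr s * M powr \<rho> + b powr s * M powr \<rho>) = M * M powr \<rho>"
      unfolding M_def by (simp add: algebra_simps)
    also have "\<dots> = M powr (1 + \<rho>)" using M by (simp add: powr_add)
    finally show ?thesis unfolding ta tb .
  qed
  have R: "c / 2 * ff \<rho> (a / c) = M powr (1 + \<rho>)"
  proof -
    have "(a / c) powr s + (1 - a / c) powr s = (2 * M) / c powr s"
    proof -
      have "1 - a / c = b / c" unfolding c_def using c c_def by (simp add: field_simps)
      then show ?thesis unfolding M_def by (simp add: powr_divide add_divide_distrib)
    qed
    then have "((a / c) powr s + (1 - a / c) powr s) powr (1 + \<rho>) = (2 * M) powr (1 + \<rho>) / c powr (s * (1 + \<rho>))"
      by (simp add: powr_divide powr_powr)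
    also have "s * (1 + \<rho>) = 1" using rs1 by (simp add: algebra_simps)
    finally have e: "((a / c) powr s + (1 - a / c) powr s) powr (1 + \<rho>) = 2 powr (1 + \<rho>) * M powr (1 + \<rho>) / c"
      using c by (simp add: powr_mult)
    have "c / 2 * ff \<rho> (a / c) = c / 2 * 2 powr (-\<rho>) * (2 powr (1 + \<rho>) * M powr (1 + \<rho>) / c)"
      unfolding ff_def s_def[symmetric] e by simp
    also have "\<dots> = (2 powr (-\<rho>) * 2 powr (1 + \<rho>) / 2) * M powr (1 + \<rho>) * (c / c)"
      by (simp add: field_simps)
    also have "2 powr (-\<rho>) * 2 powr (1 + \<rho>) = 2" by (simp add: powr_add[symmetric])
    finally show ?thesis using c by simp
  qed
  show ?thesis using L R unfolding M_def s_def c_def by simp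
qed

lemma sum_bool: "(\<Sum>x\<in>(UNIV::bool set). f x) = f False + f True"
  by (simp add: UNIV_bool)

lemma cap_decomp:
  assumes Y: "finite Y" and nn: "\<forall>x. \<forall>y\<in>Y. 0 \<le> W x y"
  shows "capacity Y W = (\<Sum>y\<in>Y. (W False y + W True y) / 2 * (1 - h (W False y / (W False y + W True y))))"
proof -
  define g where "g = (\<lambda>x y. if W x y > 0 then W x y * log 2 (W x y / (W False y / 2 + W True y / 2)) else 0)"
  have o: "out_prob W y = W False y / 2 + W True y / 2" for y unfolding out_prob_def sum_bool ..
  have inner: "(\<Sum>y\<in>{y\<in>Y. W x y > 0}. W x y * log 2 (W x y / out_prob W y)) = (\<Sum>y\<in>Y. g x y)" for x
    unfolding g_def o by (simp add: sum.inter_filter[OF Y])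
  have "capacity Y W = (1/2) * (\<Sum>y\<in>Y. g False y) + (1/2) * (\<Sum>y\<in>Y. g True y)"
    unfolding capacity_def sum_bool inner ..
  also have "\<dots> = (\<Sum>y\<in>Y. (1/2) * (g False y + g True y))"
    by (simp add: sum_distrib_left sum.distrib distrib_left)
  also have "\<dots> = (\<Sum>y\<in>Y. (W False y + W True y) / 2 * (1 - h (W False y / (W False y + W True y))))"
  proof (rule sum.cong[OF refl])
    fix y assume y: "y \<in> Y"
    show "(1/2) * (g False y + g True y) = (W False y + W True y) / 2 * (1 - h (W False y / (W False y + W True y)))"
      unfolding g_def using cap_point[of "W False y" "W True y"] nn y by simp
  qed
  finally show ?thesis .
qed

lemma F_decomp:
  assumes Y: "finite Y" and nn: "\<forall>x. \<forall>y\<in>Y. 0 \<le> W x y" and r: "\<rho> > -1"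
  shows "gallager_F \<rho> Y W = (\<Sum>y\<in>Y. (W False y + W True y) / 2 * ff \<rho> (W False y / (W False y + W True y)))"
proof -
  define s where "s = 1 / (1 + \<rho>)"
  define g where "g = (\<lambda>x y. if W x y > 0 then W x y * (((1/2) * (W False y powr s + W True y powr s)) / W x y powr s) powr \<rho> else 0)"
  have inner: "(\<Sum>y\<in>{y\<in>Y. W x y > 0}. W x y * (((1/2) * (\<Sum>x'\<in>UNIV. W x' y powr s)) / W x y powr s) powr \<rho>) = (\<Sum>y\<in>Y. g x y)" for x
    unfolding g_def sum_bool by (simp only: sum.inter_filter[OF Y])
  have "gallager_F \<rho> Y W = (1/2) * (\<Sum>y\<in>Y. g False y) + (1/2) * (\<Sum>y\<in>Y. g True y)"
    unfolding gallager_F_def s_def[symmetric] inner by (rule sum_bool)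
  also have "\<dots> = (\<Sum>y\<in>Y. (1/2) * (g False y + g True y))"
    by (simp add: sum_distrib_left sum.distrib distrib_left)
  also have "\<dots> = (\<Sum>y\<in>Y. (W False y + W True y) / 2 * ff \<rho> (W False y / (W False y + W True y)))"
  proof (rule sum.cong[OF refl])
    fix y assume y: "y \<in> Y"
    show "(1/2) * (g False y + g True y) = (W False y + W True y) / 2 * ff \<rho> (W False y / (W False y + W True y))"
      unfolding g_def s_def using F_point[of "W False y" "W True y" \<rho>] nn y r by simp
  qed
  finally show ?thesis .
qed

lemma chord_half:
  assumes r: "\<rho> > -1" and p: "0 \<le> p" "p \<le> 1/2"
  shows "1 + (2 powr (-\<rho>) - 1) * (1 - h p) \<le> ff \<rho> p"
proof -
  consider "p = 0" | "p = 1/2" | "0 < p \<and> p < 1/2" using p by linarith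
  then show ?thesis
  proof cases
    case 1 then show ?thesis using ff_0[OF r] by simp
  next
    case 2 show ?thesis unfolding 2 using ff_half[OF r] by simp
  next
    case 3
    define k where "k = - DF \<rho> p * ln 2 / ln ((1 - p) / p)"
    have t1: "ff \<rho> 0 + k * h 0 \<le> ff \<rho> p + k * h p"
      unfolding k_def by (rule tangent[OF r]) (use 3 in auto)
    have t2: "ff \<rho> (1/2) + k * h (1/2) \<le> ff \<rho> p + k * h p"
      unfolding k_def by (rule tangent[OF r]) (use 3 in auto)
    have hb: "0 \<le> h p" "h p \<le> 1" using h_bounds_half p by auto
    have "(1 - h p) * (2 powr (-\<rho>)) \<le> (1 - h p) * (ff \<rho> p + k * h p)"
      using t1 hb ff_0[OF r] by (intro mult_left_mono) auto
    moreover have "h p * (1 + k) \<le> h p * (ff \<rho> p + k * h p)"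
      using t2 hb ff_half[OF r] by (intro mult_left_mono) auto
    ultimately have "(1 - h p) * (2 powr (-\<rho>)) + h p * (1 + k) \<le> ff \<rho> p + k * h p"
      by (simp add: algebra_simps)
    then show ?thesis by (simp add: algebra_simps)
  qed
qed

lemma chord:
  assumes r: "\<rho> > -1" and p: "0 \<le> p" "p \<le> 1"
  shows "1 + (2 powr (-\<rho>) - 1) * (1 - h p) \<le> ff \<rho> p"
proof (cases "p \<le> 1/2")
  case True then show ?thesis using chord_half[OF r] p by simp
next
  case False then show ?thesis using chord_half[OF r, of "1 - p"] p by (simp add: ff_sym h_sym)
qed

lemma F_bsc_ff: "F_bsc \<rho> C = ff \<rho> (h_inv (1 - C))"
  unfolding F_bsc_def ff_def Let_def ..

lemma jensen_bound:
  fixes w pp :: "'y \<Rightarrow> real"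
  assumes Y: "finite Y" and r: "\<rho> > -1"
    and w: "\<forall>y\<in>Y. w y \<ge> 0" and ws: "(\<Sum>y\<in>Y. w y) = 1"
    and pp: "\<forall>y\<in>Y. 0 \<le> pp y \<and> pp y \<le> 1"
    and p0: "0 \<le> p0" "p0 \<le> 1/2" and hp0: "h p0 = (\<Sum>y\<in>Y. w y * h (pp y))"
  shows "(\<Sum>y\<in>Y. w y * ff \<rho> (pp y)) \<le> ff \<rho> p0"
proof -
  consider "p0 = 0" | "p0 = 1/2" | "0 < p0 \<and> p0 < 1/2" using p0 by linarith
  then show ?thesis
  proof cases
    case 3
    define k where "k = - DF \<rho> p0 * ln 2 / ln ((1 - p0) / p0)"
    have t: "ff \<rho> (pp y) \<le> ff \<rho> p0 + k * (h p0 - h (pp y))" if "y \<in> Y" for y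
    proof -
      have "ff \<rho> (pp y) + k * h (pp y) \<le> ff \<rho> p0 + k * h p0"
        unfolding k_def by (rule tangent[OF r]) (use 3 pp that in auto)
      then show ?thesis by (simp add: algebra_simps)
    qed
    have "(\<Sum>y\<in>Y. w y * ff \<rho> (pp y)) \<le> (\<Sum>y\<in>Y. w y * (ff \<rho> p0 + k * (h p0 - h (pp y))))"
      by (rule sum_mono) (use t w in \<open>auto intro: mult_left_mono\<close>)
    also have "\<dots> = ff \<rho> p0 * (\<Sum>y\<in>Y. w y) + k * (h p0 * (\<Sum>y\<in>Y. w y) - (\<Sum>y\<in>Y. w y * h (pp y)))"
      by (simp add: algebra_simps sum.distrib sum_distrib_left sum_distrib_right sum_subtractf)
    also have "\<dots> = ff \<rho> p0" using ws hp0 by simp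
    finally show ?thesis .
  next
    case 1
    have "(\<Sum>y\<in>Y. w y * h (pp y)) = 0" using hp0 1 by simp
    then have z: "\<forall>y\<in>Y. w y * h (pp y) = 0"
      using sum_nonneg_eq_0_iff[OF Y, of "\<lambda>y. w y * h (pp y)"] w pp h_bounds by auto
    have "w y * ff \<rho> (pp y) = w y * ff \<rho> p0" if y: "y \<in> Y" for y
    proof (cases "w y = 0")
      case False
      then have "h (pp y) = 0" using z y by auto
      then have "pp y = 0 \<or> pp y = 1" using h_zero_iff pp y by auto
      then show ?thesis using 1 ff_0[OF r] ff_1[OF r] by auto
    qed simp
    then have "(\<Sum>y\<in>Y. w y * ff \<rho> (pp y)) = (\<Sum>y\<in>Y. w y * ff \<rho> p0)"
      by (rule sum.cong[OF refl])
    then have "(\<Sum>y\<in>Y. w y * ff \<rho> (pp y)) = (\<Sum>y\<in>Y. w y) * ff \<rho> p0"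
      by (simp add: sum_distrib_right)
    then show ?thesis using ws by simp
  next
    case 2
    have "(\<Sum>y\<in>Y. w y * (1 - h (pp y))) = 0" using hp0 2 ws
      by (simp add: algebra_simps sum_subtractf)
    then have z: "\<forall>y\<in>Y. w y * (1 - h (pp y)) = 0"
      using sum_nonneg_eq_0_iff[OF Y, of "\<lambda>y. w y * (1 - h (pp y))"] w pp h_bounds by auto
    have "w y * ff \<rho> (pp y) = w y * ff \<rho> p0" if y: "y \<in> Y" for y
    proof (cases "w y = 0")
      case False
      then have "h (pp y) = 1" using z y by auto
      then have e: "pp y = 1/2" using h_one_iff pp y by auto
      show ?thesis by (simp only: e 2)
    qed simp
    then have "(\<Sum>y\<in>Y. w y * ff \<rho> (pp y)) = (\<Sum>y\<in>Y. w y * ff \<rho> p0)"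
      by (rule sum.cong[OF refl])
    then have "(\<Sum>y\<in>Y. w y * ff \<rho> (pp y)) = (\<Sum>y\<in>Y. w y) * ff \<rho> p0"
      by (simp add: sum_distrib_right)
    then show ?thesis using ws by simp
  qed
qed

lemma channel_bounds:
  assumes Y: "finite Y" and nn: "\<forall>x. \<forall>y\<in>Y. 0 \<le> W x y" and rows: "\<forall>x. (\<Sum>y\<in>Y. W x y) = 1"
    and r: "\<rho> > -1"
  shows "0 \<le> capacity Y W \<and> capacity Y W \<le> 1 \<and> F_bec \<rho> (capacity Y W) \<le> gallager_F \<rho> Y W
         \<and> gallager_F \<rho> Y W \<le> F_bsc \<rho> (capacity Y W)"
proof -
  define w where "w = (\<lambda>y. (W False y + W True y) / 2)"
  define pp where "pp = (\<lambda>y. W False y / (W False y + W True y))"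
  have w0: "\<forall>y\<in>Y. w y \<ge> 0" unfolding w_def using nn by auto
  have ws: "(\<Sum>y\<in>Y. w y) = 1" unfolding w_def using rows
    by (simp add: sum.distrib sum_divide_distrib[symmetric])
  have ppb: "\<forall>y\<in>Y. 0 \<le> pp y \<and> pp y \<le> 1"
  proof
    fix y assume y: "y \<in> Y"
    have a: "W False y \<ge> 0" and b: "W True y \<ge> 0" using nn y by auto
    show "0 \<le> pp y \<and> pp y \<le> 1" unfolding pp_def using a b
      by (cases "W False y + W True y = 0") (auto simp: divide_le_eq_1)
  qed
  have C: "capacity Y W = (\<Sum>y\<in>Y. w y * (1 - h (pp y)))"
    unfolding cap_decomp[OF Y nn] w_def pp_def ..
  have Fd: "gallager_F \<rho> Y W = (\<Sum>y\<in>Y. w y * ff \<rho> (pp y))"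
    unfolding F_decomp[OF Y nn r] w_def pp_def ..
  define H where "H = (\<Sum>y\<in>Y. w y * h (pp y))"
  have CH: "capacity Y W = 1 - H" unfolding C H_def using ws
    by (simp add: algebra_simps sum_subtractf)
  have H0: "0 \<le> H" unfolding H_def using w0 ppb h_bounds by (intro sum_nonneg) auto
  have H1: "H \<le> 1"
  proof -
    have "H \<le> (\<Sum>y\<in>Y. w y * 1)" unfolding H_def
      using w0 ppb h_bounds by (intro sum_mono mult_left_mono) auto
    then show ?thesis using ws by simp
  qed
  define p0 where "p0 = h_inv H"
  have p0: "0 \<le> p0" "p0 \<le> 1/2" "h p0 = H" unfolding p0_def using h_inv[OF H0 H1] by auto
  have up: "gallager_F \<rho> Y W \<le> F_bsc \<rho> (capacity Y W)"
    unfolding Fd F_bsc_ff CH using jensen_bound[OF Y r w0 ws ppb p0(1,2)] p0(3) unfolding H_def p0_def by simp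
  have "(\<Sum>y\<in>Y. w y * (1 + (2 powr (-\<rho>) - 1) * (1 - h (pp y)))) \<le> (\<Sum>y\<in>Y. w y * ff \<rho> (pp y))"
    using w0 ppb chord[OF r] by (intro sum_mono mult_left_mono) auto
  moreover have "(\<Sum>y\<in>Y. w y * (1 + (2 powr (-\<rho>) - 1) * (1 - h (pp y))))
      = (\<Sum>y\<in>Y. w y) + (2 powr (-\<rho>) - 1) * (\<Sum>y\<in>Y. w y * (1 - h (pp y)))"
  proof -
    have "(\<Sum>y\<in>Y. w y * (1 + (2 powr (-\<rho>) - 1) * (1 - h (pp y))))
        = (\<Sum>y\<in>Y. w y + (2 powr (-\<rho>) - 1) * (w y * (1 - h (pp y))))"
      by (rule sum.cong) (simp_all add: algebra_simps)
    also have "\<dots> = (\<Sum>y\<in>Y. w y) + (2 powr (-\<rho>) - 1) * (\<Sum>y\<in>Y. w y * (1 - h (pp y)))"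
      by (simp add: sum.distrib sum_distrib_left)
    finally show ?thesis .
  qed
  ultimately have lo: "F_bec \<rho> (capacity Y W) \<le> gallager_F \<rho> Y W"
    unfolding F_bec_def Fd C ws by simp
  show ?thesis using up lo CH H0 H1 by simp
qed

lemma ff_strict_pos:
  assumes r: "\<rho> > 0" and ab: "0 \<le> a" "a < b" "b \<le> 1/2"
  shows "ff \<rho> a < ff \<rho> b"
proof (rule DERIV_pos_imp_increasing_open[OF ab(2)])
  fix x assume x: "a < x" "x < b"
  then have "0 < x" "x < 1/2" using ab by auto
  then show "\<exists>y. (ff \<rho> has_real_derivative y) (at x) \<and> 0 < y"
    using ff_deriv[of \<rho> x] DF_sign_pos[OF r] r by auto
next
  show "continuous_on {a..b} (ff \<rho>)"
    by (rule continuous_on_subset[OF ff_cont]) (use r ab in auto)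
qed

lemma ff_strict_neg:
  assumes r: "\<rho> < 0" "\<rho> > -1" and ab: "0 \<le> a" "a < b" "b \<le> 1/2"
  shows "ff \<rho> a > ff \<rho> b"
proof (rule DERIV_neg_imp_decreasing_open[OF ab(2)])
  fix x assume x: "a < x" "x < b"
  then have "0 < x" "x < 1/2" using ab by auto
  then show "\<exists>y. (ff \<rho> has_real_derivative y) (at x) \<and> y < 0"
    using ff_deriv[of \<rho> x] DF_sign_neg[OF r] r by auto
next
  show "continuous_on {a..b} (ff \<rho>)"
    by (rule continuous_on_subset[OF ff_cont]) (use r ab in auto)
qed

lemma h_inv_strict:
  assumes "0 \<le> q1" "q1 < q2" "q2 \<le> 1"
  shows "h_inv q1 < h_inv q2"
proof -
  have "h_inv q1 \<le> h_inv q2" using h_inv_mono assms by simp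
  moreover have "h_inv q1 \<noteq> h_inv q2"
    using h_inv[of q1] h_inv[of q2] assms by (metis less_irrefl order.trans less_imp_le)
  ultimately show ?thesis by simp
qed

lemma F_bsc_strict:
  assumes r: "\<rho> > -1" "\<rho> \<noteq> 0" and c: "0 \<le> c1" "c1 < c2" "c2 \<le> 1"
  shows "(\<rho> > 0 \<longrightarrow> F_bsc \<rho> c2 < F_bsc \<rho> c1) \<and> (\<rho> < 0 \<longrightarrow> F_bsc \<rho> c2 > F_bsc \<rho> c1)"
proof -
  have lt: "h_inv (1 - c2) < h_inv (1 - c1)" using h_inv_strict c by simp
  have b: "0 \<le> h_inv (1 - c2)" "h_inv (1 - c1) \<le> 1/2" using h_inv c by auto
  show ?thesis unfolding F_bsc_ff using ff_strict_pos[OF _ b(1) lt b(2)] ff_strict_neg[OF _ r(1) b(1) lt b(2)]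
    by auto
qed

lemma F_bsc_inj:
  assumes r: "\<rho> > -1" "\<rho> \<noteq> 0" and c: "c1 \<in> {0..1}" "c2 \<in> {0..1}" "F_bsc \<rho> c1 = F_bsc \<rho> c2"
  shows "c1 = c2"
proof (rule ccontr)
  assume "c1 \<noteq> c2"
  then consider "c1 < c2" | "c2 < c1" by linarith
  then show False
  proof cases
    case 1 then show ?thesis using F_bsc_strict[OF r, of c1 c2] c r by (cases "\<rho> > 0") auto
  next
    case 2 then show ?thesis using F_bsc_strict[OF r, of c2 c1] c r by (cases "\<rho> > 0") auto
  qed
qed

lemma F_bec_inj:
  assumes r: "\<rho> \<noteq> 0" and "F_bec \<rho> c1 = F_bec \<rho> c2"
  shows "c1 = c2"
proof -
  have "2 powr (-\<rho>) \<noteq> (1::real)" using r by simp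
  then show ?thesis using assms(2) unfolding F_bec_def by simp
qed

lemma C_bsc_eq:
  assumes r: "\<rho> > -1" "\<rho> \<noteq> 0" and c: "c \<in> {0..1}" and t: "F_bsc \<rho> c = t"
  shows "C_bsc \<rho> t = c"
  unfolding C_bsc_def by (rule the_equality) (use c t F_bsc_inj[OF r] in auto)

lemma C_bec_eq:
  assumes r: "\<rho> \<noteq> 0" and c: "c \<in> {0..1}" and t: "F_bec \<rho> c = t"
  shows "C_bec \<rho> t = c"
  unfolding C_bec_def by (rule the_equality) (use c t F_bec_inj[OF r] in auto)

lemma ff_range_pos:
  assumes r: "\<rho> > 0" and p: "0 \<le> p" "p \<le> 1/2"
  shows "2 powr (-\<rho>) \<le> ff \<rho> p \<and> ff \<rho> p \<le> 1"
proof -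
  have r': "\<rho> > -1" using r by simp
  have e: "ff \<rho> 0 < ff \<rho> (1/2)" using ff_strict_pos[OF r, of 0 "1/2"] by simp
  have "ff \<rho> 0 \<le> ff \<rho> p"
    using ff_strict_pos[OF r, of 0 p] p by (cases "p = 0") auto
  moreover have "ff \<rho> p \<le> ff \<rho> (1/2)"
  proof (cases "p = 1/2")
    case True show ?thesis unfolding True by simp
  next
    case False then show ?thesis using ff_strict_pos[OF r, of p "1/2"] p by auto
  qed
  ultimately show ?thesis using ff_0[OF r'] ff_half[OF r'] by simp
qed

lemma ff_range_neg:
  assumes r: "\<rho> < 0" "\<rho> > -1" and p: "0 \<le> p" "p \<le> 1/2"
  shows "1 \<le> ff \<rho> p \<and> ff \<rho> p \<le> 2 powr (-\<rho>)"
proof -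
  have "ff \<rho> p \<le> ff \<rho> 0"
    using ff_strict_neg[OF r, of 0 p] p by (cases "p = 0") auto
  moreover have "ff \<rho> (1/2) \<le> ff \<rho> p"
  proof (cases "p = 1/2")
    case True show ?thesis unfolding True by simp
  next
    case False then show ?thesis using ff_strict_neg[OF r, of p "1/2"] p by auto
  qed
  ultimately show ?thesis using ff_0[OF r(2)] ff_half[OF r(2)] by simp
qed

lemma F_bsc_surj:
  assumes r: "\<rho> > -1" and t: "min 1 (2 powr (-\<rho>)) \<le> t" "t \<le> max 1 (2 powr (-\<rho>))"
  shows "\<exists>c\<in>{0..1}. F_bsc \<rho> c = t"
proof -
  have cont: "continuous_on {0..1/2} (ff \<rho>)" by (rule continuous_on_subset[OF ff_cont[OF r]]) auto
  have "\<exists>p\<in>{0..1/2}. ff \<rho> p = t"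
  proof (cases "2 powr (-\<rho>) \<le> (1::real)")
    case True
    then have "ff \<rho> 0 \<le> t" "t \<le> ff \<rho> (1/2)" using t ff_0[OF r] ff_half[OF r] by auto
    then show ?thesis using IVT'[of "ff \<rho>" 0 t "1/2"] cont by auto
  next
    case False
    then have "ff \<rho> (1/2) \<le> t" "t \<le> ff \<rho> 0" using t ff_0[OF r] ff_half[OF r] by auto
    then show ?thesis using IVT2'[of "ff \<rho>" "1/2" t 0] cont by auto
  qed
  then obtain p where p: "0 \<le> p" "p \<le> 1/2" "ff \<rho> p = t" by auto
  have hb: "0 \<le> h p" "h p \<le> 1" using h_bounds_half p by auto
  have "F_bsc \<rho> (1 - h p) = t" unfolding F_bsc_ff using h_inv_h[OF p(1,2)] p(3) by simp
  then show ?thesis using hb by (intro bexI[of _ "1 - h p"]) auto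
qed

lemma bims_basic:
  assumes "bims Y W"
  shows "finite Y" "\<forall>x. \<forall>y\<in>Y. 0 \<le> W x y" "\<forall>x. (\<Sum>y\<in>Y. W x y) = 1"
  using assms unfolding bims_def by auto

lemma part1_gen:
  assumes r: "\<rho> > -1" and Y: "finite Y" and nn: "\<forall>x. \<forall>y\<in>Y. 0 \<le> W x y" and rows: "\<forall>x. (\<Sum>y\<in>Y. W x y) = 1"
  shows "(F_bec \<rho> (capacity Y W) \<le> gallager_F \<rho> Y W \<and> gallager_F \<rho> Y W \<le> F_bsc \<rho> (capacity Y W))
      \<and> (\<rho> < 0 \<longrightarrow> C_bsc \<rho> (gallager_F \<rho> Y W) \<le> capacity Y W \<and> capacity Y W \<le> C_bec \<rho> (gallager_F \<rho> Y W))
      \<and> (\<rho> > 0 \<longrightarrow> C_bec \<rho> (gallager_F \<rho> Y W) \<le> capacity Y W \<and> capacity Y W \<le> C_bsc \<rho> (gallager_F \<rho> Y W))"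
proof -
  define C where "C = capacity Y W"
  define F where "F = gallager_F \<rho> Y W"
  have cb: "0 \<le> C" "C \<le> 1" "F_bec \<rho> C \<le> F" "F \<le> F_bsc \<rho> C"
    using channel_bounds[OF Y nn rows r] unfolding C_def F_def by auto
  define d where "d = 2 powr (-\<rho>) - 1"
  have p0: "0 \<le> h_inv (1 - C)" "h_inv (1 - C) \<le> 1/2" using h_inv[of "1 - C"] cb by auto
  have neg: "C_bsc \<rho> F \<le> C \<and> C \<le> C_bec \<rho> F" if rn: "\<rho> < 0"
  proof -
    have d: "d > 0" unfolding d_def using rn by simp
    have "0 \<le> d * C" using d cb by simp
    then have F1: "1 \<le> F" using cb(3) unfolding F_bec_def d_def[symmetric] by linarith
    have F2: "F \<le> 2 powr (-\<rho>)" using cb(4) ff_range_neg[OF rn r p0] unfolding F_bsc_ff by simp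
    obtain c where c: "c \<in> {0..1}" "F_bsc \<rho> c = F"
      using F_bsc_surj[OF r, of F] F1 F2 d unfolding d_def by auto
    have Cb: "C_bsc \<rho> F = c" using C_bsc_eq[OF r _ c] rn by simp
    have "c \<le> C"
    proof (rule ccontr)
      assume "\<not> c \<le> C"
      then have "F_bsc \<rho> c > F_bsc \<rho> C" using F_bsc_strict[OF r, of C c] rn cb c by auto
      then show False using c cb by simp
    qed
    moreover have "C_bec \<rho> F = (F - 1) / d"
    proof (rule C_bec_eq)
      show "\<rho> \<noteq> 0" using rn by simp
      have "0 \<le> (F - 1) / d" using F1 d by simp
      moreover have "(F - 1) / d \<le> 1" using F2 d by (simp add: pos_divide_le_eq d_def)
      ultimately show "(F - 1) / d \<in> {0..1}" by simp
      show "F_bec \<rho> ((F - 1) / d) = F" unfolding F_bec_def d_def[symmetric] using d by simp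
    qed
    moreover have "C \<le> (F - 1) / d" using cb(3) d unfolding F_bec_def d_def[symmetric]
      by (simp add: pos_le_divide_eq mult.commute)
    ultimately show ?thesis using Cb by simp
  qed
  have pos: "C_bec \<rho> F \<le> C \<and> C \<le> C_bsc \<rho> F" if rp: "\<rho> > 0"
  proof -
    have "2 powr (-\<rho>) < 2 powr (0::real)" by (rule powr_less_mono) (use rp in auto)
    then have d: "d < 0" unfolding d_def by simp
    have "d * 1 \<le> d * C" using d cb(2) by (intro mult_left_mono_neg) auto
    then have F1: "2 powr (-\<rho>) \<le> F" using cb(3) unfolding F_bec_def d_def[symmetric] by (simp add: d_def)
    have F2: "F \<le> 1" using cb(4) ff_range_pos[OF rp p0] unfolding F_bsc_ff by simp
    obtain c where c: "c \<in> {0..1}" "F_bsc \<rho> c = F"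
      using F_bsc_surj[OF r, of F] F1 F2 d unfolding d_def by auto
    have Cb: "C_bsc \<rho> F = c" using C_bsc_eq[OF r _ c] rp by simp
    have "C \<le> c"
    proof (rule ccontr)
      assume "\<not> C \<le> c"
      then have "F_bsc \<rho> C < F_bsc \<rho> c" using F_bsc_strict[OF r, of c C] rp cb c by auto
      then show False using c cb by simp
    qed
    moreover have "C_bec \<rho> F = (F - 1) / d"
    proof (rule C_bec_eq)
      show "\<rho> \<noteq> 0" using rp by simp
      have "0 \<le> (F - 1) / d" using F2 d by (simp add: divide_nonpos_neg)
      moreover have "(F - 1) / d \<le> 1" using F1 d by (simp add: neg_divide_le_eq d_def)
      ultimately show "(F - 1) / d \<in> {0..1}" by simp
      show "F_bec \<rho> ((F - 1) / d) = F" unfolding F_bec_def d_def[symmetric] using d by simp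
    qed
    moreover have "(F - 1) / d \<le> C" using cb(3) d unfolding F_bec_def d_def[symmetric]
      by (simp add: neg_divide_le_eq mult.commute)
    ultimately show ?thesis using Cb by simp
  qed
  show ?thesis using cb neg pos unfolding C_def F_def by blast
qed

definition tc :: "real \<Rightarrow> real \<Rightarrow> real" where
  "tc a b = (a + b) / 2 * (1 - h (a / (a + b)))"

definition tf :: "real \<Rightarrow> real \<Rightarrow> real \<Rightarrow> real" where
  "tf \<rho> a b = (a + b) / 2 * ff \<rho> (a / (a + b))"

lemma tc_u0: "tc u 0 = u / 2"
  unfolding tc_def by (cases "u = 0") auto

lemma tc_0u: "tc 0 u = u / 2"
  unfolding tc_def by simp

lemma tc_uu: "tc u u = 0"
proof (cases "u = 0")
  case False
  then have "u / (u + u) = 1/2" by simp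
  then show ?thesis unfolding tc_def by simp
qed (simp add: tc_def)

lemma tc_mix1: "tc (l * (1 - e)) (l * e) = l / 2 * (1 - h e)"
proof (cases "l = 0")
  case False
  have s: "l * (1 - e) + l * e = l" by (simp add: algebra_simps)
  have "l * (1 - e) / l = 1 - e" using False by simp
  then show ?thesis unfolding tc_def s by (simp add: h_sym)
qed (simp add: tc_def)

lemma tc_mix2: "tc (l * e) (l * (1 - e)) = l / 2 * (1 - h e)"
proof (cases "l = 0")
  case False
  have s: "l * e + l * (1 - e) = l" by (simp add: algebra_simps)
  have "l * e / l = e" using False by simp
  then show ?thesis unfolding tc_def s by simp
qed (simp add: tc_def)

lemma tf_u0: "\<rho> > -1 \<Longrightarrow> tf \<rho> u 0 = u / 2 * 2 powr (-\<rho>)"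
  unfolding tf_def by (cases "u = 0") (auto simp: ff_1)

lemma tf_0u: "\<rho> > -1 \<Longrightarrow> tf \<rho> 0 u = u / 2 * 2 powr (-\<rho>)"
  unfolding tf_def by (simp add: ff_0)

lemma tf_uu: "\<rho> > -1 \<Longrightarrow> tf \<rho> u u = u"
proof (cases "u = 0")
  case False
  assume r: "\<rho> > -1"
  have e: "u / (u + u) = 1/2" using False by simp
  show ?thesis unfolding tf_def e ff_half[OF r] by simp
qed (simp add: tf_def)

lemma tf_mix1: "tf \<rho> (l * (1 - e)) (l * e) = l / 2 * ff \<rho> e"
proof (cases "l = 0")
  case False
  have s: "l * (1 - e) + l * e = l" by (simp add: algebra_simps)
  have "l * (1 - e) / l = 1 - e" using False by simp
  then show ?thesis unfolding tf_def s by (simp add: ff_sym)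
qed (simp add: tf_def)

lemma tf_mix2: "tf \<rho> (l * e) (l * (1 - e)) = l / 2 * ff \<rho> e"
proof (cases "l = 0")
  case False
  have s: "l * e + l * (1 - e) = l" by (simp add: algebra_simps)
  have "l * e / l = e" using False by simp
  then show ?thesis unfolding tf_def s by simp
qed (simp add: tf_def)

lemma cap_decomp': "finite Y \<Longrightarrow> \<forall>x. \<forall>y\<in>Y. 0 \<le> W x y \<Longrightarrow> capacity Y W = (\<Sum>y\<in>Y. tc (W False y) (W True y))"
  unfolding tc_def by (rule cap_decomp)

lemma F_decomp': "finite Y \<Longrightarrow> \<forall>x. \<forall>y\<in>Y. 0 \<le> W x y \<Longrightarrow> \<rho> > -1 \<Longrightarrow> gallager_F \<rho> Y W = (\<Sum>y\<in>Y. tf \<rho> (W False y) (W True y))"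
  unfolding tf_def by (rule F_decomp)

lemma block2:
  assumes "y0 \<noteq> y1" "W False y0 = W True y1" "W True y0 = W False y1"
  shows "image_mset (W False) (mset_set {y0, y1}) = image_mset (W True) (mset_set {y0, y1})
     \<and> (\<forall>y\<in>{y0, y1}. \<forall>y'\<in>{y0, y1}. {#W False y, W True y#} = {#W False y', W True y'#})"
  using assms by (auto simp: add_mset_commute)

lemma block1:
  assumes "W False y0 = W True y0"
  shows "image_mset (W False) (mset_set {y0}) = image_mset (W True) (mset_set {y0})
     \<and> (\<forall>y\<in>{y0}. \<forall>y'\<in>{y0}. {#W False y, W True y#} = {#W False y', W True y'#})"
  using assms by auto

lemma part_bec: "partition_on {0::nat, 1, 2} {{0, 1}, {2}}"
  by (auto simp: partition_on_def disjoint_def)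

lemma part_bsc: "partition_on {0::nat, 1} {{0, 1}}"
  by (auto simp: partition_on_def disjoint_def)

lemma part_mix: "partition_on {0::nat, 1, 2, 3, 4} {{0, 1}, {2, 3}, {4}}"
  by (auto simp: partition_on_def disjoint_def)

lemma bec_facts:
  assumes C: "0 \<le> C" "C \<le> 1" and r: "\<rho> > -1"
  shows "bims bec_Y (bec_W (1 - C)) \<and> capacity bec_Y (bec_W (1 - C)) = C
          \<and> gallager_F \<rho> bec_Y (bec_W (1 - C)) = F_bec \<rho> C"
proof -
  let ?W = "bec_W (1 - C)"
  have nn: "\<forall>x. \<forall>y\<in>bec_Y. 0 \<le> ?W x y" using C unfolding bec_Y_def bec_W_def by auto
  have fin: "finite bec_Y" unfolding bec_Y_def by simp
  have rows: "\<forall>x. (\<Sum>y\<in>bec_Y. ?W x y) = 1" unfolding bec_Y_def bec_W_def by auto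
  have P: "\<forall>B\<in>{{0::nat, 1}, {2}}. image_mset (?W False) (mset_set B) = image_mset (?W True) (mset_set B)
                 \<and> (\<forall>y\<in>B. \<forall>y'\<in>B. {#?W False y, ?W True y#} = {#?W False y', ?W True y'#})"
    using block2[of 0 1 ?W] block1[of ?W 2] unfolding bec_W_def by auto
  have bims: "bims bec_Y ?W" unfolding bims_def using fin nn rows P part_bec unfolding bec_Y_def by blast
  have cap: "capacity bec_Y ?W = C"
    unfolding cap_decomp'[OF fin nn] unfolding bec_Y_def bec_W_def by (simp add: tc_u0 tc_0u tc_uu)
  have F: "gallager_F \<rho> bec_Y ?W = F_bec \<rho> C"
    unfolding F_decomp'[OF fin nn r] unfolding bec_Y_def bec_W_def F_bec_def
    by (simp add: tf_u0[OF r] tf_0u[OF r] tf_uu[OF r] algebra_simps)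
  show ?thesis using bims cap F by simp
qed

lemma bsc_facts:
  assumes C: "0 \<le> C" "C \<le> 1" and r: "\<rho> > -1"
  shows "bims bsc_Y (bsc_W (h_inv (1 - C))) \<and> capacity bsc_Y (bsc_W (h_inv (1 - C))) = C
          \<and> gallager_F \<rho> bsc_Y (bsc_W (h_inv (1 - C))) = F_bsc \<rho> C"
proof -
  define e where "e = h_inv (1 - C)"
  have e: "0 \<le> e" "e \<le> 1/2" "h e = 1 - C" unfolding e_def using h_inv[of "1 - C"] C by auto
  let ?W = "bsc_W e"
  have nn: "\<forall>x. \<forall>y\<in>bsc_Y. 0 \<le> ?W x y" using e unfolding bsc_Y_def bsc_W_def by auto
  have fin: "finite bsc_Y" unfolding bsc_Y_def by simp
  have rows: "\<forall>x. (\<Sum>y\<in>bsc_Y. ?W x y) = 1" unfolding bsc_Y_def bsc_W_def by auto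
  have P: "\<forall>B\<in>{{0::nat, 1}}. image_mset (?W False) (mset_set B) = image_mset (?W True) (mset_set B)
                 \<and> (\<forall>y\<in>B. \<forall>y'\<in>B. {#?W False y, ?W True y#} = {#?W False y', ?W True y'#})"
    using block2[of 0 1 ?W] unfolding bsc_W_def by auto
  have bims: "bims bsc_Y ?W" unfolding bims_def using fin nn rows P part_bsc unfolding bsc_Y_def by blast
  have cap: "capacity bsc_Y ?W = C"
  proof -
    have "capacity bsc_Y ?W = tc (1 * (1 - e)) (1 * e) + tc (1 * e) (1 * (1 - e))"
      unfolding cap_decomp'[OF fin nn] unfolding bsc_Y_def bsc_W_def by simp
    also have "\<dots> = C" unfolding tc_mix1 tc_mix2 e(3) by simp
    finally show ?thesis .
  qed
  have F: "gallager_F \<rho> bsc_Y ?W = F_bsc \<rho> C"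
  proof -
    have "gallager_F \<rho> bsc_Y ?W = tf \<rho> (1 * (1 - e)) (1 * e) + tf \<rho> (1 * e) (1 * (1 - e))"
      unfolding F_decomp'[OF fin nn r] unfolding bsc_Y_def bsc_W_def by simp
    also have "\<dots> = F_bsc \<rho> C" unfolding tf_mix1 tf_mix2 F_bsc_ff e_def by simp
    finally show ?thesis .
  qed
  show ?thesis using bims cap F unfolding e_def by simp
qed

definition mix_W :: "real \<Rightarrow> real \<Rightarrow> real \<Rightarrow> bool \<Rightarrow> nat \<Rightarrow> real" where
  "mix_W l e C x y = (if y = 0 then (if x then l * e else l * (1 - e))
     else if y = 1 then (if x then l * (1 - e) else l * e)
     else if y = 2 then (if x then 0 else (1 - l) * C)
     else if y = 3 then (if x then (1 - l) * C else 0)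
     else (1 - l) * (1 - C))"

lemma mix_facts:
  assumes C: "0 \<le> C" "C \<le> 1" and r: "\<rho> > -1" and l: "0 \<le> l" "l \<le> 1"
  defines "e \<equiv> h_inv (1 - C)"
  shows "bims {0,1,2,3,4} (mix_W l e C) \<and> capacity {0,1,2,3,4} (mix_W l e C) = C
          \<and> gallager_F \<rho> {0,1,2,3,4} (mix_W l e C) = l * F_bsc \<rho> C + (1 - l) * F_bec \<rho> C"
proof -
  have e: "0 \<le> e" "e \<le> 1/2" "h e = 1 - C" unfolding e_def using h_inv[of "1 - C"] C by auto
  let ?W = "mix_W l e C"
  let ?Y = "{0::nat,1,2,3,4}"
  have nn: "\<forall>x. \<forall>y\<in>?Y. 0 \<le> ?W x y" using e C l unfolding mix_W_def by auto
  have fin: "finite ?Y" by simp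
  have rows: "\<forall>x. (\<Sum>y\<in>?Y. ?W x y) = 1" unfolding mix_W_def by (auto simp: algebra_simps)
  have P: "\<forall>B\<in>{{0::nat, 1}, {2, 3}, {4}}. image_mset (?W False) (mset_set B) = image_mset (?W True) (mset_set B)
                 \<and> (\<forall>y\<in>B. \<forall>y'\<in>B. {#?W False y, ?W True y#} = {#?W False y', ?W True y'#})"
    using block2[of 0 1 ?W] block2[of 2 3 ?W] block1[of ?W 4] unfolding mix_W_def by auto
  have bims: "bims ?Y ?W" unfolding bims_def using fin nn rows P part_mix by blast
  have cap: "capacity ?Y ?W = C"
  proof -
    have "capacity ?Y ?W = tc (l * (1 - e)) (l * e) + tc (l * e) (l * (1 - e)) + tc ((1 - l) * C) 0
        + tc 0 ((1 - l) * C) + tc ((1 - l) * (1 - C)) ((1 - l) * (1 - C))"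
      unfolding cap_decomp'[OF fin nn] unfolding mix_W_def by simp
    also have "\<dots> = C" unfolding tc_mix1 tc_mix2 tc_u0 tc_0u tc_uu e(3) by (simp add: algebra_simps)
    finally show ?thesis .
  qed
  have F: "gallager_F \<rho> ?Y ?W = l * F_bsc \<rho> C + (1 - l) * F_bec \<rho> C"
  proof -
    have "gallager_F \<rho> ?Y ?W = tf \<rho> (l * (1 - e)) (l * e) + tf \<rho> (l * e) (l * (1 - e)) + tf \<rho> ((1 - l) * C) 0
        + tf \<rho> 0 ((1 - l) * C) + tf \<rho> ((1 - l) * (1 - C)) ((1 - l) * (1 - C))"
      unfolding F_decomp'[OF fin nn r] unfolding mix_W_def by simp
    also have "\<dots> = l * F_bsc \<rho> C + (1 - l) * F_bec \<rho> C"
      unfolding tf_mix1 tf_mix2 tf_u0[OF r] tf_0u[OF r] tf_uu[OF r] F_bsc_ff e_def F_bec_def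
      by (simp add: algebra_simps)
    finally show ?thesis .
  qed
  show ?thesis using bims cap F by simp
qed

lemma exists_channel:
  assumes C: "0 \<le> C" "C \<le> 1" and r: "\<rho> > -1" and t: "F_bec \<rho> C \<le> t" "t \<le> F_bsc \<rho> C"
  shows "\<exists>(Y :: nat set) W. bims Y W \<and> capacity Y W = C \<and> gallager_F \<rho> Y W = t"
proof -
  define A where "A = F_bec \<rho> C"
  define B where "B = F_bsc \<rho> C"
  define l where "l = (if B = A then 0 else (t - A) / (B - A))"
  have AB: "A \<le> B" using t unfolding A_def B_def by simp
  have l: "0 \<le> l" "l \<le> 1" and lt: "l * B + (1 - l) * A = t"
  proof -
    show "0 \<le> l" unfolding l_def using t AB unfolding A_def[symmetric] B_def[symmetric] by auto
    show "l \<le> 1" unfolding l_def using t AB unfolding A_def[symmetric] B_def[symmetric] by (auto simp: divide_le_eq_1)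
    show "l * B + (1 - l) * A = t"
    proof (cases "B = A")
      case True then show ?thesis unfolding l_def using t unfolding A_def[symmetric] B_def[symmetric] by simp
    next
      case False
      then have "B - A \<noteq> 0" by simp
      have "l * B + (1 - l) * A = A + l * (B - A)" by (simp add: algebra_simps)
      also have "l * (B - A) = t - A" unfolding l_def using False \<open>B - A \<noteq> 0\<close> by simp
      finally show ?thesis by simp
    qed
  qed
  show ?thesis using mix_facts[OF C r l] lt unfolding A_def B_def by blast
qed

theorem theorem1:
  fixes \<rho> :: real
  assumes "\<rho> > -1"
  shows
   "(\<forall>(Y :: 'y set) W. bims Y W \<longrightarrow>
        (F_bec \<rho> (capacity Y W) \<le> gallager_F \<rho> Y W \<and> gallager_F \<rho> Y W \<le> F_bsc \<rho> (capacity Y W))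
      \<and> (\<rho> < 0 \<longrightarrow> C_bsc \<rho> (gallager_F \<rho> Y W) \<le> capacity Y W \<and> capacity Y W \<le> C_bec \<rho> (gallager_F \<rho> Y W))
      \<and> (\<rho> > 0 \<longrightarrow> C_bec \<rho> (gallager_F \<rho> Y W) \<le> capacity Y W \<and> capacity Y W \<le> C_bsc \<rho> (gallager_F \<rho> Y W)))
    \<and> (\<forall>C \<in> {0..1}.
        bims bec_Y (bec_W (1 - C)) \<and> capacity bec_Y (bec_W (1 - C)) = C
          \<and> gallager_F \<rho> bec_Y (bec_W (1 - C)) = F_bec \<rho> C
      \<and> bims bsc_Y (bsc_W (h_inv (1 - C))) \<and> capacity bsc_Y (bsc_W (h_inv (1 - C))) = C
          \<and> gallager_F \<rho> bsc_Y (bsc_W (h_inv (1 - C))) = F_bsc \<rho> C)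
    \<and> (\<forall>C t. C \<in> {0..1} \<longrightarrow>
        ((F_bec \<rho> C \<le> t \<and> t \<le> F_bsc \<rho> C) \<longleftrightarrow>
         (\<exists>(Y :: nat set) W. bims Y W \<and> capacity Y W = C \<and> gallager_F \<rho> Y W = t)))"
proof (intro conjI allI impI ballI)
  fix Y :: "'y set" and W assume b: "bims Y W"
  note bb = bims_basic[OF b]
  note P = part1_gen[OF assms bb]
  show "F_bec \<rho> (capacity Y W) \<le> gallager_F \<rho> Y W" using P by blast
  show "gallager_F \<rho> Y W \<le> F_bsc \<rho> (capacity Y W)" using P by blast
  show "\<rho> < 0 \<Longrightarrow> C_bsc \<rho> (gallager_F \<rho> Y W) \<le> capacity Y W" using P by blast
  show "\<rho> < 0 \<Longrightarrow> capacity Y W \<le> C_bec \<rho> (gallager_F \<rho> Y W)" using P by blast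
  show "\<rho> > 0 \<Longrightarrow> C_bec \<rho> (gallager_F \<rho> Y W) \<le> capacity Y W" using P by blast
  show "\<rho> > 0 \<Longrightarrow> capacity Y W \<le> C_bsc \<rho> (gallager_F \<rho> Y W)" using P by blast
next
  fix C :: real assume C: "C \<in> {0..1}"
  note B1 = bec_facts[of C \<rho>] and B2 = bsc_facts[of C \<rho>]
  show "bims bec_Y (bec_W (1 - C))" using B1 C assms by auto
  show "capacity bec_Y (bec_W (1 - C)) = C" using B1 C assms by auto
  show "gallager_F \<rho> bec_Y (bec_W (1 - C)) = F_bec \<rho> C" using B1 C assms by auto
  show "bims bsc_Y (bsc_W (h_inv (1 - C)))" using B2 C assms by auto
  show "capacity bsc_Y (bsc_W (h_inv (1 - C))) = C" using B2 C assms by auto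
  show "gallager_F \<rho> bsc_Y (bsc_W (h_inv (1 - C))) = F_bsc \<rho> C" using B2 C assms by auto
next
  fix C t :: real assume C: "C \<in> {0..1}"
  show "(F_bec \<rho> C \<le> t \<and> t \<le> F_bsc \<rho> C) \<longleftrightarrow>
         (\<exists>(Y :: nat set) W. bims Y W \<and> capacity Y W = C \<and> gallager_F \<rho> Y W = t)"
  proof
    assume "F_bec \<rho> C \<le> t \<and> t \<le> F_bsc \<rho> C"
    then show "\<exists>(Y :: nat set) W. bims Y W \<and> capacity Y W = C \<and> gallager_F \<rho> Y W = t"
      using exists_channel[of C \<rho> t] C assms by auto
  next
    assume "\<exists>(Y :: nat set) W. bims Y W \<and> capacity Y W = C \<and> gallager_F \<rho> Y W = t"
    then obtain Y :: "nat set" and W where YW: "bims Y W" "capacity Y W = C" "gallager_F \<rho> Y W = t" by blast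
    have "F_bec \<rho> (capacity Y W) \<le> gallager_F \<rho> Y W \<and> gallager_F \<rho> Y W \<le> F_bsc \<rho> (capacity Y W)"
      using part1_gen[OF assms bims_basic[OF YW(1)]] by blast
    then show "F_bec \<rho> C \<le> t \<and> t \<le> F_bsc \<rho> C" using YW by simp
  qed
qed

end
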